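(* Let $\alpha\in(0,1)$. For every $\varepsilon>0$ and every natural number $n_0$ there exist natural numbers $n$ and $N$ with $n_0\le n<N$, and random variables $\mathcal{A}_n,\mathcal{A}_{n+1},\dots,\mathcal{A}_N$ (defined on a common probability space) whose values are subsets of $\mathbb{B}^n,\mathbb{B}^{n+1},\dots,\mathbb{B}^N$ respectively, such that: (1) the size of $\mathcal{A}_i$ never exceeds $2^{\alpha i}$, for each $i\in\{n,\dots,N\}$; (2) for every binary string $x$ of length $N$, the probability of the event "for some $i\in\{n,\dots,N\}$, some element of $\mathcal{A}_i$ is a substring of $x$" exceeds $1-\varepsilon$.
   Context: $\mathbb{B}^m$ denotes the set of binary strings of length $m$. A substring of $x$ means a contiguous block $x_j x_{j+1}\dots x_{j+\ell-1}$ of consecutive symbols of $x$. *)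

theory Defs
  imports "HOL-Probability.Probability" "HOL-Library.Sublist"
begin

end

theory Submission
  imports Defs
begin

definition W :: "nat \<Rightarrow> bool list set" where "W m = {y. length y = m}"
definition Sub :: "bool list \<Rightarrow> nat \<Rightarrow> bool list set" where "Sub x m = {y. sublist y x \<and> length y = m}"
definition conc :: "bool list set \<Rightarrow> nat \<Rightarrow> bool list set" where
  "conc T t = concat ` {ws. set ws \<subseteq> T \<and> length ws = t}"

lemma W_eq: "W m = {xs. set xs \<subseteq> UNIV \<and> length xs = m}" by (auto simp: W_def)
lemma finite_W[simp]: "finite (W m)"
  unfolding W_eq by (rule finite_lists_length_eq) simp
lemma card_W: "card (W m) = 2 ^ m"
  unfolding W_eq by (subst card_lists_length_eq) simp_all

lemma Sub_W: "Sub x m \<subseteq> W m" by (auto simp: Sub_def W_def)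
lemma finite_Sub[simp]: "finite (Sub x m)" by (rule finite_subset[OF Sub_W finite_W])
lemma card_Sub: "card (Sub x m) \<le> 2 ^ m"
proof -
  have "card (Sub x m) \<le> card (W m)" by (rule card_mono[OF finite_W Sub_W])
  then show ?thesis by (simp add: card_W)
qed
lemma Sub_ne: "m \<le> length x \<Longrightarrow> Sub x m \<noteq> {}"
  by (auto simp: Sub_def intro!: exI[of _ "take m x"])
lemma card_Sub_pos: "m \<le> length x \<Longrightarrow> card (Sub x m) \<ge> 1"
proof -
  assume "m \<le> length x"
  then have "Sub x m \<noteq> {}" by (rule Sub_ne)
  then have "card (Sub x m) > 0" using finite_Sub[of x m] by (simp add: card_gt_0_iff)
  then show ?thesis by simp
qed

lemma finite_conc: "finite T \<Longrightarrow> finite (conc T t)"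
  unfolding conc_def by (intro finite_imageI finite_lists_length_eq)
lemma card_conc: "finite T \<Longrightarrow> card (conc T t) \<le> card T ^ t"
proof -
  assume fT: "finite T"
  have "card (conc T t) \<le> card {ws. set ws \<subseteq> T \<and> length ws = t}"
    unfolding conc_def by (rule card_image_le) (rule finite_lists_length_eq[OF fT])
  also have "\<dots> = card T ^ t" by (rule card_lists_length_eq[OF fT])
  finally show ?thesis .
qed
lemma len_concat_W: "set ws \<subseteq> W m \<Longrightarrow> length (concat ws) = length ws * m"
  by (induction ws) (auto simp: W_def)
lemma conc_W: "T \<subseteq> W m \<Longrightarrow> conc T t \<subseteq> W (t * m)"
  unfolding conc_def using len_concat_W by (fastforce simp: W_def)
lemma conc_ne: "T \<noteq> {} \<Longrightarrow> conc T t \<noteq> {}"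
proof -
  assume "T \<noteq> {}" then obtain a where "a \<in> T" by blast
  then have "concat (replicate t a) \<in> conc T t" by (auto simp: conc_def)
  then show ?thesis by blast
qed

lemma Sub_conc: "y \<in> Sub x (t * m) \<Longrightarrow> y \<in> conc (Sub x m) t"
proof (induction t arbitrary: y)
  case 0 then show ?case by (auto simp: Sub_def conc_def intro!: image_eqI[of _ _ "[]"])
next
  case (Suc t)
  have sy: "sublist y x" and ly: "length y = m + t * m" using Suc.prems by (auto simp: Sub_def)
  have "drop m y \<in> Sub x (t*m)" using sy ly
    by (auto simp: Sub_def intro: sublist_order.order_trans[OF sublist_drop])
  then obtain ws where ws: "set ws \<subseteq> Sub x m" "length ws = t" "drop m y = concat ws"
    using Suc.IH by (auto simp: conc_def)
  have "take m y \<in> Sub x m" using sy ly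
    by (auto simp: Sub_def intro: sublist_order.order_trans[OF sublist_take])
  then have "concat (take m y # ws) \<in> conc (Sub x m) (Suc t)" using ws unfolding conc_def
    by (intro image_eqI[of _ _ "take m y # ws"]) auto
  moreover have "concat (take m y # ws) = y" by (simp add: ws(3)[symmetric])
  ultimately show ?case by simp
qed

lemma rate:
  fixes a :: "nat \<Rightarrow> real" and mm tk :: "nat \<Rightarrow> nat" and K :: nat
  assumes K: "K \<ge> 1" and mmS: "\<And>k. mm (Suc k) = tk k * mm k" and mmp: "\<And>k. mm k > 0"
  and a1: "\<And>k. k \<le> K \<Longrightarrow> 1 \<le> a k" and a2: "a 0 \<le> 2 ^ mm 0"
  shows "\<exists>k<K. a (Suc k) \<ge> a k ^ tk k / 2 powr (mm (Suc k) / K)"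
proof (rule ccontr)
  assume "\<not> ?thesis"
  then have lt: "\<And>k. k < K \<Longrightarrow> a (Suc k) < a k ^ tk k / 2 powr (mm (Suc k) / K)" by force
  define \<rho> where "\<rho> k = ln (a k) / mm k" for k
  have step: "\<rho> (Suc k) + ln 2 / K < \<rho> k" if k: "k < K" for k
  proof -
    have ak: "a k \<ge> 1" "a (Suc k) \<ge> 1" using a1 k by auto
    have tpos: "tk k > 0"
    proof (rule ccontr)
      assume "\<not> tk k > 0" then have "tk k = 0" by simp
      then show False using mmp[of "Suc k"] mmS[of k] by simp
    qed
    have "ln (a (Suc k)) < ln (a k ^ tk k / 2 powr (mm (Suc k) / K))"
      using lt[OF k] ak by (intro ln_less_cancel_iff[THEN iffD2]) auto
    also have "\<dots> = tk k * ln (a k) - mm (Suc k) / K * ln 2"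
      using ak by (simp add: ln_div ln_realpow ln_powr)
    finally have "ln (a (Suc k)) / mm (Suc k) < (tk k * ln (a k) - mm (Suc k) / K * ln 2) / mm (Suc k)"
      using mmp[of "Suc k"] by (intro divide_strict_right_mono) auto
    also have "\<dots> = ln (a k) / mm k - ln 2 / K"
      using mmp[of k] mmp[of "Suc k"] tpos K unfolding mmS by (simp add: field_simps)
    finally show ?thesis unfolding \<rho>_def by simp
  qed
  have claim: "Suc j \<le> K \<longrightarrow> \<rho> (Suc j) + Suc j * (ln 2 / K) < \<rho> 0" for j
  proof (induction j)
    case 0 then show ?case using step[of 0] by simp
  next
    case (Suc j)
    show ?case
    proof
      assume "Suc (Suc j) \<le> K"
      then have "\<rho> (Suc (Suc j)) + ln 2 / K < \<rho> (Suc j)" "\<rho> (Suc j) + Suc j * (ln 2 / K) < \<rho> 0"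
        using step[of "Suc j"] Suc by auto
      moreover have gen: "\<And>y::real. real (Suc (Suc j)) * y = real (Suc j) * y + y"
        by (simp add: algebra_simps)
      ultimately show "\<rho> (Suc (Suc j)) + Suc (Suc j) * (ln 2 / K) < \<rho> 0"
        using gen[of "ln 2 / K"] by linarith
    qed
  qed
  obtain j where j: "K = Suc j" using K by (cases K) auto
  have "\<rho> K + K * (ln 2 / K) < \<rho> 0" using claim[of j] j by simp
  then have c1: "\<rho> K + ln 2 < \<rho> 0" using K by simp
  have "ln (a 0) \<le> ln (2 ^ mm 0)" using a1[of 0] a2 by simp
  then have "\<rho> 0 \<le> ln 2" using mmp[of 0] unfolding \<rho>_def by (simp add: ln_realpow field_simps)
  moreover have "\<rho> K \<ge> 0" using a1[of K] mmp[of K] unfolding \<rho>_def by simp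
  ultimately show False using c1 by linarith
qed

lemma exist_t:
  fixes \<alpha> c :: real and K m :: nat
  assumes al: "\<alpha> > 0" and c: "c > 0" and K: "K > 0" and aK: "1 / K \<le> \<alpha> / 2" and m: "m \<ge> 1"
  shows "\<exists>t\<ge>2. 2 ^ (2 ^ m) * (c * 2 powr (real (t * m) / K) + 1) \<le> 2 powr (\<alpha> * real (t * m))"
proof -
  define D :: real where "D = 2 ^ (2 ^ m) * (c + 1)"
  define \<beta> where "\<beta> = \<alpha> - 1 / K"
  have Dp: "D > 0" using c by (simp add: D_def)
  have bp: "\<beta> > 0" using aK al by (simp add: \<beta>_def)
  obtain t0 :: nat where t0: "log 2 D / \<beta> \<le> real t0" using real_arch_simple by blast
  define t where "t = max t0 2"
  define L where "L = real (t * m)"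
  have "real t0 \<le> L"
  proof -
    have "t0 \<le> t" by (simp add: t_def)
    moreover have "t \<le> t * m" using m by simp
    ultimately have "t0 \<le> t * m" by linarith
    then show ?thesis unfolding L_def by linarith
  qed
  then have "\<beta> * real t0 \<le> \<beta> * L" using bp by simp
  moreover have "log 2 D \<le> \<beta> * real t0" using t0 bp by (simp add: divide_le_eq mult.commute)
  ultimately have "log 2 D \<le> \<beta> * L" by linarith
  then have "2 powr (log 2 D) \<le> 2 powr (\<beta> * L)" by (intro powr_mono) auto
  then have DL: "D \<le> 2 powr (\<beta> * L)" using Dp by simp
  have L0: "L \<ge> 0" by (simp add: L_def)
  have g1: "2 powr (L / K) \<ge> 1" using L0 K by (intro ge_one_powr_ge_zero) auto
  have "2 ^ (2 ^ m) * (c * 2 powr (L / K) + 1) \<le> 2 ^ (2 ^ m) * ((c + 1) * 2 powr (L / K))"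
    using g1 by (intro mult_left_mono) (auto simp: algebra_simps)
  also have "\<dots> = D * 2 powr (L / K)" by (simp add: D_def)
  also have "\<dots> \<le> 2 powr (\<beta> * L) * 2 powr (L / K)" using DL by simp
  also have "\<dots> = 2 powr (\<alpha> * L)" unfolding \<beta>_def by (simp add: powr_add[symmetric] algebra_simps)
  finally show ?thesis unfolding L_def by (intro exI[of _ t]) (auto simp: t_def)
qed

theorem lemma3:
  fixes \<alpha> \<epsilon> :: real and n0 :: nat
  assumes "0 < \<alpha>" and "\<alpha> < 1" and "\<epsilon> > 0"
  shows "\<exists>n N (p :: (nat \<Rightarrow> bool list set) pmf).
           n0 \<le> n \<and> n < N \<and>
           (\<forall>A \<in> set_pmf p. \<forall>i \<in> {n..N}.
               A i \<subseteq> {x. length x = i} \<and> real (card (A i)) \<le> 2 powr (\<alpha> * real i)) \<and>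
           (\<forall>x :: bool list. length x = N \<longrightarrow>
               measure_pmf.prob p {A. \<exists>i \<in> {n..N}. \<exists>y \<in> A i. sublist y x} > 1 - \<epsilon>)"
proof -
  note al = assms(1) and al1 = assms(2) and ep = assms(3)
  define K :: nat where "K = nat \<lceil>2 / \<alpha>\<rceil> + 1"
  have K2: "real K \<ge> 2 / \<alpha>"
  proof -
    have "2 / \<alpha> > 0" using al by simp
    then have "real_of_int \<lceil>2 / \<alpha>\<rceil> > 0" using le_of_int_ceiling[of "2 / \<alpha>"] by linarith
    then have "\<lceil>2 / \<alpha>\<rceil> > 0" by (simp only: of_int_0_less_iff)
    then have "\<lceil>2 / \<alpha>\<rceil> \<ge> 0" by (rule less_imp_le)
    then have "real (nat \<lceil>2 / \<alpha>\<rceil>) = real_of_int \<lceil>2 / \<alpha>\<rceil>" by simp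
    moreover have "real_of_int \<lceil>2 / \<alpha>\<rceil> \<ge> 2 / \<alpha>" by (rule le_of_int_ceiling)
    ultimately show ?thesis unfolding K_def of_nat_add of_nat_1 by linarith
  qed
  have "2 / \<alpha> > 2" using al al1 by (simp add: field_simps)
  then have Kge: "K \<ge> 2" using K2 by linarith
  then have Kp: "K > 0" by simp
  have aK: "1 / real K \<le> \<alpha> / 2" using K2 al Kp by (simp add: field_simps)
  define c :: real where "c = \<bar>ln \<epsilon>\<bar> + 1"
  have cp: "c > 0" by (simp add: c_def)
  have ce: "exp (- c) < \<epsilon>"
  proof -
    have "- c < ln \<epsilon>" by (simp add: c_def)
    then have "exp (- c) < exp (ln \<epsilon>)" by simp
    then show ?thesis using ep by simp
  qed
  define P where "P m L \<longleftrightarrow> (2::real) ^ (2 ^ m) * (c * 2 powr (real L / K) + 1) \<le> 2 powr (\<alpha> * real L)"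
    for m L :: nat
  define tt where "tt m = (SOME t. t \<ge> 2 \<and> P m (t * m))" for m
  have tt: "tt m \<ge> 2 \<and> P m (tt m * m)" if "m \<ge> 1" for m
    unfolding tt_def P_def by (rule someI_ex) (rule exist_t[OF al cp Kp aK that])
  define ms where "ms = rec_nat (max n0 1) (\<lambda>k mk. tt mk * mk)"
  have ms0: "ms 0 = max n0 1" and msS: "ms (Suc k) = tt (ms k) * ms k" for k
    by (simp_all add: ms_def)
  have ms1: "ms k \<ge> 1" for k
  proof (induction k)
    case 0 then show ?case by (simp add: ms0)
  next
    case (Suc k) then show ?case using tt[of "ms k"] by (simp add: msS)
  qed
  have msinc: "ms k < ms (Suc k)" for k
  proof -
    have "1 * ms k < 2 * ms k" using ms1[of k] by simp
    also have "\<dots> \<le> tt (ms k) * ms k" using tt[OF ms1[of k]] by (intro mult_right_mono) auto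
    finally show ?thesis by (simp add: msS)
  qed
  have smono: "strict_mono ms" using msinc by (intro strict_monoI_Suc) auto
  define M where "M k = nat \<lceil>c * 2 powr (real (ms (Suc k)) / K)\<rceil>" for k
  define idx where "idx = (SIGMA k:{..<K}. Pow (W (ms k)) \<times> {..<M k})"
  have fin_idx: "finite idx" unfolding idx_def by (intro finite_SigmaI) auto
  define f :: "nat \<times> bool list set \<times> nat \<Rightarrow> bool list pmf" where
    "f z = (case z of (k, T, j) \<Rightarrow> if T \<noteq> {} then pmf_of_set (conc T (tt (ms k)))
              else return_pmf (replicate (ms (Suc k)) False))" for z
  define Q where "Q = Pi_pmf idx [] f"
  define Af where "Af \<omega> i = \<omega> ` {z \<in> idx. ms (Suc (fst z)) = i}" for \<omega> :: "nat \<times> bool list set \<times> nat \<Rightarrow> bool list" and i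
  define p where "p = map_pmf Af Q"
  have setf: "set_pmf (f (k, T, j)) \<subseteq> W (ms (Suc k))" if "(k, T, j) \<in> idx" for k T j
  proof (cases "T = {}")
    case True then show ?thesis by (simp add: f_def W_def)
  next
    case False
    have TW: "T \<subseteq> W (ms k)" using that by (auto simp: idx_def)
    have fT: "finite T" by (rule finite_subset[OF TW finite_W])
    have "set_pmf (f (k, T, j)) = conc T (tt (ms k))"
      using False fT by (simp add: f_def finite_conc conc_ne)
    also have "\<dots> \<subseteq> W (ms (Suc k))" using conc_W[OF TW] by (simp add: msS)
    finally show ?thesis .
  qed
  have setQ: "\<omega> z \<in> set_pmf (f z)" if "\<omega> \<in> set_pmf Q" "z \<in> idx" for \<omega> z
  proof -
    have "\<omega> \<in> PiE_dflt idx [] (set_pmf \<circ> f)" using that(1) set_Pi_pmf[OF fin_idx, of "[]" f]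
      by (simp add: Q_def)
    then have "\<forall>x. (x \<in> idx \<longrightarrow> \<omega> x \<in> (set_pmf \<circ> f) x) \<and> (x \<notin> idx \<longrightarrow> \<omega> x = [])"
      unfolding PiE_dflt_def by (rule CollectD)
    then show ?thesis using that(2) unfolding comp_def by blast
  qed
  have G1: "n0 \<le> ms 1" using msinc[of 0] ms0 by simp
  have G2: "ms 1 < ms K" using smono Kge by (simp add: strict_mono_less)
  have G3: "\<forall>A \<in> set_pmf p. \<forall>i \<in> {ms 1..ms K}.
               A i \<subseteq> {x. length x = i} \<and> real (card (A i)) \<le> 2 powr (\<alpha> * real i)"
  proof (intro ballI conjI)
    fix A i assume A: "A \<in> set_pmf p" and i: "i \<in> {ms 1..ms K}"
    then obtain \<omega> where \<omega>: "\<omega> \<in> set_pmf Q" "A = Af \<omega>" by (auto simp: p_def)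
    show "A i \<subseteq> {x. length x = i}"
    proof
      fix y assume "y \<in> A i"
      then obtain k T j where z: "(k, T, j) \<in> idx" "ms (Suc k) = i" "y = \<omega> (k, T, j)"
        using \<omega> by (auto simp: Af_def)
      then show "y \<in> {x. length x = i}" using setQ[OF \<omega>(1) z(1)] setf[OF z(1)] by (auto simp: W_def)
    qed
    show "real (card (A i)) \<le> 2 powr (\<alpha> * real i)"
    proof (cases "\<exists>k0<K. ms (Suc k0) = i")
      case False
      then have E: "{z \<in> idx. ms (Suc (fst z)) = i} = {}" by (auto simp: idx_def)
      show ?thesis unfolding \<omega>(2) Af_def E by simp
    next
      case True
      then obtain k0 where k0: "k0 < K" "ms (Suc k0) = i" by blast
      have sub: "{z \<in> idx. ms (Suc (fst z)) = i} \<subseteq> {k0} \<times> (Pow (W (ms k0)) \<times> {..<M k0})"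
        using k0 smono by (auto simp: idx_def strict_mono_eq)
      have "card (A i) \<le> card {z \<in> idx. ms (Suc (fst z)) = i}"
        using \<omega> by (simp add: Af_def card_image_le fin_idx)
      also have "\<dots> \<le> card ({k0} \<times> (Pow (W (ms k0)) \<times> {..<M k0}))"
        by (intro card_mono sub) auto
      also have "\<dots> = 2 ^ (2 ^ ms k0) * M k0" by (simp add: card_cartesian_product card_Pow card_W)
      finally have c1: "real (card (A i)) \<le> 2 ^ (2 ^ ms k0) * real (M k0)"
        by (metis of_nat_le_iff of_nat_mult of_nat_numeral of_nat_power)
      have "real (M k0) \<le> c * 2 powr (real (ms (Suc k0)) / K) + 1"
      proof -
        define y where "y = c * 2 powr (real (ms (Suc k0)) / K)"
        have "y \<ge> 0" using cp by (simp add: y_def)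
        then have "\<lceil>y\<rceil> \<ge> 0" by simp
        then have "real (nat \<lceil>y\<rceil>) = real_of_int \<lceil>y\<rceil>" by simp
        also have "\<dots> \<le> y + 1" by (rule of_int_ceiling_le_add_one)
        finally show ?thesis unfolding M_def y_def .
      qed
      then have "real (card (A i)) \<le> 2 ^ (2 ^ ms k0) * (c * 2 powr (real (ms (Suc k0)) / K) + 1)"
        using c1 by (meson mult_left_mono zero_le_power zero_le_numeral order_trans)
      also have "\<dots> \<le> 2 powr (\<alpha> * real (ms (Suc k0)))"
        using tt[OF ms1[of k0]] by (simp add: P_def msS)
      finally show ?thesis using k0 by simp
    qed
  qed
  have G4: "\<forall>x :: bool list. length x = ms K \<longrightarrow>
               measure_pmf.prob p {A. \<exists>i \<in> {ms 1..ms K}. \<exists>y \<in> A i. sublist y x} > 1 - \<epsilon>"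
  proof (intro allI impI)
    fix x :: "bool list" assume lx: "length x = ms K"
    define a where "a k = real (card (Sub x (ms k)))" for k
    have a1: "1 \<le> a k" if "k \<le> K" for k
    proof -
      have "ms k \<le> ms K" using that smono by (simp add: strict_mono_less_eq)
      then show ?thesis using card_Sub_pos[of "ms k" x] lx by (simp add: a_def)
    qed
    have a2: "a 0 \<le> 2 ^ ms 0" unfolding a_def
      by (metis card_Sub of_nat_le_iff of_nat_numeral of_nat_power)
    obtain k0 where k0: "k0 < K" and ak0: "a (Suc k0) \<ge> a k0 ^ tt (ms k0) / 2 powr (ms (Suc k0) / K)"
    proof -
      have K1: "K \<ge> 1" using Kge by simp
      have mp: "\<And>k. ms k > 0" using ms1 by (simp add: Suc_le_eq)
      show ?thesis using rate[of K ms "\<lambda>k. tt (ms k)" a, OF K1 msS mp a1 a2] that by blast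
    qed
    define T0 where "T0 = Sub x (ms k0)"
    define t where "t = tt (ms k0)"
    define L where "L = ms (Suc k0)"
    define C where "C = conc T0 t"
    define S where "S = Sub x L"
    have Lt: "L = t * ms k0" by (simp add: L_def t_def msS)
    have T0ne: "T0 \<noteq> {}" using a1[of k0] k0 by (auto simp: a_def T0_def)
    have T0W: "T0 \<subseteq> W (ms k0)" by (simp add: T0_def Sub_W)
    have fT0: "finite T0" by (simp add: T0_def)
    have finC: "finite C" and Cne: "C \<noteq> {}" using fT0 T0ne by (simp_all add: C_def finite_conc conc_ne)
    have SC: "S \<subseteq> C" unfolding S_def C_def T0_def Lt using Sub_conc by blast
    define q where "q = card S / card C"
    have Cpos: "card C > 0" using finC Cne by (simp add: card_gt_0_iff)
    have q1: "q \<le> 1" unfolding q_def using SC finC Cpos by (simp add: card_mono)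
    have qlow: "q \<ge> 1 / 2 powr (L / K)"
    proof -
      have cC: "real (card C) \<le> a k0 ^ t"
        using card_conc[OF fT0, of t] unfolding a_def C_def T0_def
        by (metis of_nat_le_iff of_nat_power)
      have "1 / 2 powr (L / K) = (a k0 ^ t / 2 powr (L / K)) / a k0 ^ t"
        using a1[of k0] k0 by simp
      also have "\<dots> \<le> a (Suc k0) / a k0 ^ t"
        using ak0 a1[of k0] k0 by (intro divide_right_mono) (auto simp: t_def L_def)
      also have "\<dots> \<le> a (Suc k0) / card C"
        using cC Cpos a1[of "Suc k0"] k0 by (intro divide_left_mono) auto
      also have "\<dots> = q" by (simp add: q_def a_def S_def L_def)
      finally show ?thesis .
    qed
    define J where "J = (\<lambda>j. (k0, T0, j)) ` {..<M k0}"
    have JI: "J \<subseteq> idx" using k0 T0W by (auto simp: J_def idx_def)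
    define B where "B z = (if z \<in> J then - S else UNIV)" for z
    have fz: "measure_pmf.prob (f (k0, T0, j)) (- S) = 1 - q" for j
    proof -
      have "measure_pmf.prob (f (k0, T0, j)) (- S) = card (C \<inter> - S) / card C"
        using T0ne finC Cne by (simp add: f_def C_def[symmetric] t_def[symmetric] measure_pmf_of_set)
      also have "card (C \<inter> - S) = card C - card S"
        using SC finC by (metis Diff_eq card_Diff_subset finite_subset)
      also have "real (card C - card S) / card C = 1 - q"
        using SC finC Cpos Cne by (simp add: q_def card_mono of_nat_diff diff_divide_distrib)
      finally show ?thesis .
    qed
    have "measure_pmf.prob Q (Pi idx B) = (\<Prod>z\<in>idx. measure_pmf.prob (f z) (B z))"
      unfolding Q_def by (rule measure_Pi_pmf_Pi[OF fin_idx])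
    also have "\<dots> = (\<Prod>z\<in>J. measure_pmf.prob (f z) (B z))"
      using JI fin_idx by (intro prod.mono_neutral_right) (auto simp: B_def)
    also have "\<dots> = (\<Prod>j\<in>{..<M k0}. measure_pmf.prob (f (k0, T0, j)) (B (k0, T0, j)))"
      unfolding J_def by (subst prod.reindex) (auto simp: inj_on_def)
    also have "\<dots> = (1 - q) ^ M k0" by (simp add: B_def J_def fz)
    finally have PB: "measure_pmf.prob Q (Pi idx B) = (1 - q) ^ M k0" .
    have "(1 - q) ^ M k0 \<le> exp (- q) ^ M k0"
      using q1 exp_ge_add_one_self[of "- q"] by (intro power_mono) auto
    also have "\<dots> = exp (- (q * M k0))" by (simp add: exp_of_nat_mult[symmetric] algebra_simps)
    also have "\<dots> \<le> exp (- c)"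
    proof -
      have Mge: "real (M k0) \<ge> c * 2 powr (L / K)"
      proof -
        define y where "y = c * 2 powr (real L / K)"
        have "y \<ge> 0" using cp by (simp add: y_def)
        then have "\<lceil>y\<rceil> \<ge> 0" by simp
        then have "real (nat \<lceil>y\<rceil>) = real_of_int \<lceil>y\<rceil>" by simp
        moreover have "real_of_int \<lceil>y\<rceil> \<ge> y" by (rule le_of_int_ceiling)
        ultimately show ?thesis unfolding M_def y_def L_def by simp
      qed
      have "q * M k0 \<ge> (1 / 2 powr (L / K)) * (c * 2 powr (L / K))"
        using qlow Mge cp by (intro mult_mono) (auto simp: q_def)
      then have "q * M k0 \<ge> c" by simp
      then show ?thesis by simp
    qed
    finally have small: "measure_pmf.prob Q (Pi idx B) < \<epsilon>" using PB ce by simp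
    have sub2: "UNIV - Pi idx B \<subseteq> Af -` {A. \<exists>i \<in> {ms 1..ms K}. \<exists>y \<in> A i. sublist y x}"
    proof
      fix \<omega> assume "\<omega> \<in> UNIV - Pi idx B"
      then obtain z where z: "z \<in> idx" "\<omega> z \<notin> B z" by (auto simp: Pi_def)
      then have zJ: "z \<in> J" and zS: "\<omega> z \<in> S" by (auto simp: B_def split: if_splits)
      have "\<omega> z \<in> Af \<omega> L" using zJ JI by (auto simp: Af_def J_def L_def)
      moreover have "L \<in> {ms 1..ms K}" using k0 smono
        by (auto simp: L_def strict_mono_less_eq)
      moreover have "sublist (\<omega> z) x" using zS by (simp add: S_def Sub_def)
      ultimately show "\<omega> \<in> Af -` {A. \<exists>i \<in> {ms 1..ms K}. \<exists>y \<in> A i. sublist y x}" by blast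
    qed
    have "1 - \<epsilon> < 1 - measure_pmf.prob Q (Pi idx B)" using small by simp
    also have "\<dots> = measure_pmf.prob Q (UNIV - Pi idx B)"
      using measure_pmf.prob_compl[of "Pi idx B" Q] by simp
    also have "\<dots> \<le> measure_pmf.prob Q (Af -` {A. \<exists>i \<in> {ms 1..ms K}. \<exists>y \<in> A i. sublist y x})"
      by (rule measure_pmf.finite_measure_mono[OF sub2]) simp
    also have "\<dots> = measure_pmf.prob p {A. \<exists>i \<in> {ms 1..ms K}. \<exists>y \<in> A i. sublist y x}"
      by (simp add: p_def)
    finally show "measure_pmf.prob p {A. \<exists>i \<in> {ms 1..ms K}. \<exists>y \<in> A i. sublist y x} > 1 - \<epsilon>" .
  qed
  show ?thesis
    apply (rule exI[of _ "ms 1"], rule exI[of _ "ms K"], rule exI[of _ p])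
    using G1 G2 G3 G4 by (intro conjI)
qed

end
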